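(* Let $S\in\mathbb{R}^d$ have density $f(\cdot\mid\beta^* )$, and for $k=1,\dots,K$ let $\Omega_k\in\mathbb{R}^{p_k}$ have density $g_k$, with $S,\Omega_1,\dots,\Omega_K$ mutually independent. For each $k$ let the optimization variables $O_k$ be defined by the inversion map $\Omega_k=D_kS+P_kO_k+q_k$ with fixed $D_k$, invertible $P_k$, and $q_k$. Let $\mathcal{R}=\mathcal{R}_S\times\prod_{k=1}^K\mathcal{R}_{O_k}$ be convex and compact. Then \[ \log\mathbb{P}\big((S,O_1,\dots,O_K)\in\mathcal{R}\mid\beta^*\big)\le-\inf_{s\in\mathcal{R}_S,\;o_k\in\mathcal{R}_{O_k},\,k=1,\dots,K}\Big\{\Lambda_f^*(s\mid\beta^* )+\sum_{k=1}^K\Lambda_{g_k}^*(D_ks+P_ko_k+q_k)\Big\}. \]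
   Context: $\Lambda_f^*(\cdot\mid\beta^* )$ is the convex conjugate of the log-MGF $\Lambda_f(t\mid\beta^* )=\log\mathbb{E}[\exp(t^TS)\mid\beta^*]$ and $\Lambda_{g_k}^*$ the convex conjugate of the log-MGF $\Lambda_{g_k}(t)=\log\mathbb{E}[\exp(t^T\Omega_k)]$; the convex conjugate of $\Lambda$ is $\Lambda^*(x)=\sup_t\{t^Tx-\Lambda(t)\}$. *)

theory Defs
  imports "HOL-Probability.Probability"
begin

text \<open>Vectors in R^n are represented as functions nat => real that vanish outside {..<n}
  (i.e. elements of PiE {..<n} (%_. UNIV)); matrices as nat => nat => real.\<close>

definition Rn :: "nat \<Rightarrow> (nat \<Rightarrow> real) set" where
  "Rn n = PiE {..<n} (\<lambda>_. UNIV)"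

definition lebn :: "nat \<Rightarrow> (nat \<Rightarrow> real) measure" where
  "lebn n = PiM {..<n} (\<lambda>_. lborel)"

definition dotn :: "nat \<Rightarrow> (nat \<Rightarrow> real) \<Rightarrow> (nat \<Rightarrow> real) \<Rightarrow> real" where
  "dotn n t x = (\<Sum>i<n. t i * x i)"

definition mv :: "nat \<Rightarrow> nat \<Rightarrow> (nat \<Rightarrow> nat \<Rightarrow> real) \<Rightarrow> (nat \<Rightarrow> real) \<Rightarrow> (nat \<Rightarrow> real)" where
  "mv m n A x = (\<lambda>i. if i < m then (\<Sum>j<n. A i j * x j) else 0)"

definition vadd :: "(nat \<Rightarrow> real) \<Rightarrow> (nat \<Rightarrow> real) \<Rightarrow> (nat \<Rightarrow> real)" where
  "vadd x y = (\<lambda>i. x i + y i)"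

definition invertible_sq :: "nat \<Rightarrow> (nat \<Rightarrow> nat \<Rightarrow> real) \<Rightarrow> bool" where
  "invertible_sq n P \<longleftrightarrow> (\<exists>Q. \<forall>i<n. \<forall>j<n.
      (\<Sum>l<n. P i l * Q l j) = (if i = j then 1 else 0) \<and>
      (\<Sum>l<n. Q i l * P l j) = (if i = j then 1 else 0))"

definition convex_set :: "(nat \<Rightarrow> real) set \<Rightarrow> bool" where
  "convex_set A \<longleftrightarrow> (\<forall>x\<in>A. \<forall>y\<in>A. \<forall>u::real. 0 \<le> u \<and> u \<le> 1 \<longrightarrow>
      (\<lambda>i. u * x i + (1 - u) * y i) \<in> A)"

definition eln :: "ennreal \<Rightarrow> ereal" where
  "eln a = (if a = 0 then -\<infinity> else if a = \<infinity> then \<infinity> else ereal (ln (enn2real a)))"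

definition log_mgf :: "nat \<Rightarrow> ((nat \<Rightarrow> real) \<Rightarrow> ennreal) \<Rightarrow> (nat \<Rightarrow> real) \<Rightarrow> ereal" where
  "log_mgf n h t = eln (\<integral>\<^sup>+ x. ennreal (exp (dotn n t x)) * h x \<partial>lebn n)"

definition convex_conj :: "nat \<Rightarrow> ((nat \<Rightarrow> real) \<Rightarrow> ereal) \<Rightarrow> (nat \<Rightarrow> real) \<Rightarrow> ereal" where
  "convex_conj n L x = (SUP t\<in>Rn n. ereal (dotn n t x) - L t)"

end

theory Submission
  imports Defs
begin


lemma eln_ennreal: "r > 0 \<Longrightarrow> eln (ennreal r) = ereal (ln r)"
  by (simp add: eln_def)

lemma sup_sum_bound:
  fixes a :: "nat \<Rightarrow> (nat\<Rightarrow>real) \<Rightarrow> real" and \<phi> :: "nat \<Rightarrow> (nat\<Rightarrow>real) \<Rightarrow> ennreal"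
  assumes fin: "finite I" and z: "\<And>i. i\<in>I \<Longrightarrow> z i \<in> T i \<and> a i (z i) = 0 \<and> \<phi> i (z i) = 1"
  shows "\<And>pp. pp > 0 \<Longrightarrow> (\<And>t. (\<forall>i\<in>I. t i \<in> T i) \<Longrightarrow> ennreal (pp * exp (\<Sum>i\<in>I. a i (t i))) \<le> (\<Prod>i\<in>I. \<phi> i (t i)))
     \<Longrightarrow> (\<Sum>i\<in>I. SUP x\<in>T i. ereal (a i x) - eln (\<phi> i x)) \<le> ereal (- ln pp)"
  using fin z
proof (induction I rule: finite_induct)
  case (empty pp)
  from empty(2)[of z] have "ennreal pp \<le> 1" by simp
  then have "pp \<le> 1" using empty(1) by (simp add: ennreal_le_1)
  then have "0 \<le> - ln pp" using empty(1) by simp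
  then show ?case by (simp add: zero_ereal_def)
next
  case (insert k I pp)
  define SI where "SI = (\<Sum>i\<in>I. SUP x\<in>T i. ereal (a i x) - eln (\<phi> i x))"
  have zI: "\<And>i. i\<in>I \<Longrightarrow> z i \<in> T i \<and> a i (z i) = 0 \<and> \<phi> i (z i) = 1" using insert.prems by auto
  have zk: "z k \<in> T k" "a k (z k) = 0" "\<phi> k (z k) = 1" using insert.prems by auto
  have SI_nonneg: "0 \<le> SI" unfolding SI_def
  proof (rule sum_nonneg)
    fix i assume i: "i \<in> I"
    have "ereal (a i (z i)) - eln (\<phi> i (z i)) \<le> (SUP x\<in>T i. ereal (a i x) - eln (\<phi> i x))"
      using zI[OF i] by (intro SUP_upper) auto
    moreover have "ereal (a i (z i)) - eln (\<phi> i (z i)) = 0" using zI[OF i] by (simp add: eln_def)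
    ultimately show "0 \<le> (SUP x\<in>T i. ereal (a i x) - eln (\<phi> i x))" by simp
  qed
  have key: "SI \<le> ereal (- ln pp - a k x + ln r)" if x: "x \<in> T k" and r: "\<phi> k x = ennreal r" "r > 0" for x r
  proof -
    define pp' where "pp' = pp * exp (a k x) / r"
    have pp': "pp' > 0" using insert.prems(1) r by (simp add: pp'_def)
    have "SI \<le> ereal (- ln pp')" unfolding SI_def
    proof (rule insert.IH[OF pp'])
      fix t assume t: "\<forall>i\<in>I. t i \<in> T i"
      have "ennreal (pp * exp (\<Sum>i\<in>insert k I. a i ((t(k:=x)) i))) \<le> (\<Prod>i\<in>insert k I. \<phi> i ((t(k:=x)) i))"
        using t x by (intro insert.prems(2)) auto
      also have "(\<Sum>i\<in>insert k I. a i ((t(k:=x)) i)) = a k x + (\<Sum>i\<in>I. a i (t i))"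
        using insert.hyps by (auto intro!: sum.cong)
      also have "(\<Prod>i\<in>insert k I. \<phi> i ((t(k:=x)) i)) = ennreal r * (\<Prod>i\<in>I. \<phi> i (t i))"
        using insert.hyps r by (auto intro!: prod.cong arg_cong2[where f="(*)"])
      also have "pp * exp (a k x + (\<Sum>i\<in>I. a i (t i))) = r * (pp' * exp (\<Sum>i\<in>I. a i (t i)))"
        using r by (simp add: pp'_def exp_add)
      finally have "ennreal r * ennreal (pp' * exp (\<Sum>i\<in>I. a i (t i))) \<le> ennreal r * (\<Prod>i\<in>I. \<phi> i (t i))"
        using r pp' by (simp add: ennreal_mult)
      then show "ennreal (pp' * exp (\<Sum>i\<in>I. a i (t i))) \<le> (\<Prod>i\<in>I. \<phi> i (t i))"
        using r by (simp add: ennreal_mult_le_mult_iff)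
    next
      show "\<And>i. i \<in> I \<Longrightarrow> z i \<in> T i \<and> a i (z i) = 0 \<and> \<phi> i (z i) = 1" using zI .
    qed
    also have "- ln pp' = - ln pp - a k x + ln r" using insert.prems(1) r by (simp add: pp'_def ln_div ln_mult)
    finally show ?thesis .
  qed
  from key[OF zk(1), of 1] zk have SI_le: "SI \<le> ereal (- ln pp)" by simp
  obtain s where s: "SI = ereal s" using SI_nonneg SI_le by (cases SI) auto
  have "(SUP x\<in>T k. ereal (a k x) - eln (\<phi> k x)) \<le> ereal (- ln pp - s)"
  proof (rule SUP_least)
    fix x assume x: "x \<in> T k"
    show "ereal (a k x) - eln (\<phi> k x) \<le> ereal (- ln pp - s)"
    proof (cases "\<phi> k x = \<infinity>")
      case True then show ?thesis by (simp add: eln_def)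
    next
      case False
      then obtain r where r: "\<phi> k x = ennreal r" "r \<ge> 0" by (cases "\<phi> k x") auto
      have "r > 0"
      proof (rule ccontr)
        assume "\<not> r > 0" then have r0: "r = 0" using r by simp
        have "ennreal (pp * exp (\<Sum>i\<in>insert k I. a i ((z(k:=x)) i))) \<le> (\<Prod>i\<in>insert k I. \<phi> i ((z(k:=x)) i))"
          using zI x by (intro insert.prems(2)) auto
        also have "(\<Prod>i\<in>insert k I. \<phi> i ((z(k:=x)) i)) = 0"
          using insert.hyps r r0 by (simp add: prod.insert)
        finally show False using insert.prems(1) by simp
      qed
      then have "s \<le> - ln pp - a k x + ln r" using key[OF x r(1)] s by simp
      then show ?thesis using r \<open>r > 0\<close> by (simp add: eln_def)
    qed
  qed
  then have "(SUP x\<in>T k. ereal (a k x) - eln (\<phi> k x)) + SI \<le> ereal (- ln pp - s) + ereal s"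
    unfolding s by (rule add_right_mono)
  moreover have "(\<Sum>i\<in>insert k I. SUP x\<in>T i. ereal (a i x) - eln (\<phi> i x)) = (SUP x\<in>T k. ereal (a k x) - eln (\<phi> k x)) + SI"
    unfolding SI_def using insert.hyps by simp
  ultimately show ?case by simp
qed



lemma jensen_exp:
  assumes P: "prob_space M" and A: "A \<in> sets M" and pos: "measure M A > 0"
    and iY: "integrable M (\<lambda>\<omega>. indicator A \<omega> * Y \<omega>)"
  shows "ennreal (measure M A * exp ((\<integral>\<omega>. indicator A \<omega> * Y \<omega> \<partial>M) / measure M A))
           \<le> (\<integral>\<^sup>+\<omega>. ennreal (exp (Y \<omega>)) \<partial>M)"
proof -
  interpret prob_space M by (rule P)
  define p where "p = measure M A"
  define c where "c = (\<integral>\<omega>. indicator A \<omega> * Y \<omega> \<partial>M) / p"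
  define h where "h \<omega> = exp c * indicator A \<omega> + exp c * (indicator A \<omega> * Y \<omega>) - (exp c * c) * indicator A \<omega>" for \<omega>
  have iA: "integrable M (\<lambda>\<omega>. indicator A \<omega> :: real)"
    using A by (simp add: integrable_real_indicator emeasure_eq_measure)
  have ih: "integrable M h" unfolding h_def using iA iY by auto
  have "(\<integral>\<omega>. h \<omega> \<partial>M) = exp c * p + exp c * (\<integral>\<omega>. indicator A \<omega> * Y \<omega> \<partial>M) - exp c * c * p"
    unfolding h_def using iA iY A by (simp add: p_def)
  also have "\<dots> = p * exp c" using pos by (simp add: c_def p_def field_simps)
  finally have Ih: "(\<integral>\<omega>. h \<omega> \<partial>M) = p * exp c" .
  have "ennreal (p * exp c) \<le> ennreal (\<integral>\<omega>. max 0 (h \<omega>) \<partial>M)"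
    unfolding Ih[symmetric] using ih by (intro ennreal_leI integral_mono) auto
  also have "\<dots> = (\<integral>\<^sup>+\<omega>. max 0 (h \<omega>) \<partial>M)"
    using ih by (intro nn_integral_eq_integral[symmetric]) auto
  also have "\<dots> \<le> (\<integral>\<^sup>+\<omega>. ennreal (exp (Y \<omega>)) \<partial>M)"
  proof (intro nn_integral_mono ennreal_leI)
    fix \<omega>
    have e: "exp c * (1 + (Y \<omega> - c)) \<le> exp (Y \<omega>)"
      using exp_ge_add_one_self[of "Y \<omega> - c"] by (simp add: exp_diff field_simps)
    show "max 0 (h \<omega>) \<le> exp (Y \<omega>)"
    proof (cases "\<omega> \<in> A")
      case True
      then have "h \<omega> = exp c * (1 + (Y \<omega> - c))" by (simp add: h_def algebra_simps)
      then show ?thesis using e by simp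
    next
      case False then show ?thesis by (simp add: h_def)
    qed
  qed
  finally show ?thesis by (simp add: p_def c_def)
qed



lemma coord_cont[continuous_intros]: "continuous_on S (\<lambda>x::nat\<Rightarrow>real. x j)"
  by (rule continuous_on_subset[OF continuous_on_product_coordinates]) auto

lemma compact_coord_bound:
  fixes C :: "(nat \<Rightarrow> real) set"
  assumes "compact C" shows "\<exists>B. \<forall>x\<in>C. \<bar>x j\<bar> \<le> B"
proof -
  have "compact ((\<lambda>x. x j) ` C)"
    by (rule compact_continuous_image[OF coord_cont assms])
  then have "bounded ((\<lambda>x. x j) ` C)" by (rule compact_imp_bounded)
  then show ?thesis by (auto simp: bounded_real)
qed

lemma quad_lemma:
  fixes a b :: real
  assumes "\<And>u. 0 < u \<Longrightarrow> u \<le> 1 \<Longrightarrow> 0 \<le> u^2 * b - 2 * u * a" and "0 \<le> b"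
  shows "a \<le> 0"
proof (rule ccontr)
  assume "\<not> a \<le> 0" then have a: "a > 0" by simp
  show False
  proof (cases "b = 0")
    case True then show False using assms(1)[of 1] a by simp
  next
    case False
    then have b: "b > 0" using assms(2) by simp
    define u where "u = min 1 (a / b)"
    have u: "0 < u" "u \<le> 1" "u * b \<le> a" using a b
      by (auto simp: u_def min_def field_simps)
    have "u^2 * b - 2 * u * a = u * (u * b - 2 * a)" by (simp add: power2_eq_square algebra_simps)
    also have "\<dots> < 0" using u a by (intro mult_pos_neg) auto
    finally show False using assms(1)[OF u(1,2)] by simp
  qed
qed

lemma mean_in_convex:
  assumes P: "prob_space M" and A: "A \<in> sets M" and pos: "measure M A > 0"
    and C: "C \<subseteq> Rn n" "convex_set C" "compact C"
    and XC: "\<And>\<omega>. \<omega> \<in> A \<Longrightarrow> X \<omega> \<in> C"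
    and iX: "\<And>j. j < n \<Longrightarrow> integrable M (\<lambda>\<omega>. indicator A \<omega> * X \<omega> j)"
  shows "(\<lambda>j. if j < n then (\<integral>\<omega>. indicator A \<omega> * X \<omega> j \<partial>M) / measure M A else undefined) \<in> C"
    (is "?xb \<in> C")
proof -
  define p where "p = measure M A"
  have "A \<noteq> {}" using pos by auto
  then have Cne: "C \<noteq> {}" using XC by auto
  define \<phi> where "\<phi> y = (\<Sum>j<n. (y j - ?xb j)^2)" for y :: "nat \<Rightarrow> real"
  have "continuous_on C \<phi>" unfolding \<phi>_def by (intro continuous_intros)
  then obtain c where c: "c \<in> C" "\<And>y. y \<in> C \<Longrightarrow> \<phi> c \<le> \<phi> y"
    using continuous_attains_inf[OF C(3) Cne] by blast
  define w where "w j = ?xb j - c j" for j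
  have claim: "(\<Sum>j<n. (y j - c j) * w j) \<le> 0" if y: "y \<in> C" for y
  proof (rule quad_lemma)
    show "0 \<le> (\<Sum>j<n. (y j - c j)^2)" by (intro sum_nonneg) auto
    fix u :: real assume u: "0 < u" "u \<le> 1"
    have "(\<lambda>j. u * y j + (1 - u) * c j) \<in> C" using C(2) y c(1) u unfolding convex_set_def by auto
    from c(2)[OF this] have "\<phi> c \<le> \<phi> (\<lambda>j. u * y j + (1 - u) * c j)" .
    also have "\<phi> (\<lambda>j. u * y j + (1 - u) * c j) = (\<Sum>j<n. (u * (y j - c j) - w j)^2)"
      unfolding \<phi>_def w_def by (intro sum.cong) (auto simp: algebra_simps)
    also have "\<dots> = u^2 * (\<Sum>j<n. (y j - c j)^2) - 2 * u * (\<Sum>j<n. (y j - c j) * w j) + (\<Sum>j<n. (w j)^2)"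
    proof -
      have "(\<Sum>j<n. (u * (y j - c j) - w j)^2) = (\<Sum>j<n. u^2 * (y j - c j)^2 - 2 * u * ((y j - c j) * w j) + (w j)^2)"
        by (intro sum.cong) (simp_all add: power2_eq_square algebra_simps)
      then show ?thesis by (simp add: sum.distrib sum_subtractf sum_distrib_left)
    qed
    also have "\<phi> c = (\<Sum>j<n. (w j)^2)"
      unfolding \<phi>_def w_def by (intro sum.cong) (auto simp: power2_commute)
    finally show "0 \<le> u^2 * (\<Sum>j<n. (y j - c j)^2) - 2 * u * (\<Sum>j<n. (y j - c j) * w j)" by simp
  qed
  have iA: "integrable M (\<lambda>\<omega>. indicator A \<omega> :: real)"
    using A P by (simp add: integrable_real_indicator finite_measure.emeasure_eq_measure prob_space_def)
  have int_eq: "(\<integral>\<omega>. indicator A \<omega> * (\<Sum>j<n. (X \<omega> j - c j) * w j) \<partial>M)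
      = (\<Sum>j<n. w j * (\<integral>\<omega>. indicator A \<omega> * X \<omega> j \<partial>M) - w j * c j * p)"
  proof -
    have "(\<lambda>\<omega>. indicator A \<omega> * (\<Sum>j<n. (X \<omega> j - c j) * w j)) =
          (\<lambda>\<omega>. \<Sum>j<n. w j * (indicator A \<omega> * X \<omega> j) - (w j * c j) * indicator A \<omega>)"
      by (auto simp: sum_distrib_left algebra_simps)
    then show ?thesis using iX iA A by (simp add: p_def)
  qed
  also have "\<dots> = (\<Sum>j<n. p * (w j)^2)"
  proof (rule sum.cong[OF refl])
    fix j assume "j \<in> {..<n}"
    then have "w j = (\<integral>\<omega>. indicator A \<omega> * X \<omega> j \<partial>M) / p - c j" by (simp add: w_def p_def)
    then have "(\<integral>\<omega>. indicator A \<omega> * X \<omega> j \<partial>M) = p * w j + p * c j"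
      using pos unfolding p_def[symmetric] by (simp add: field_simps)
    then show "w j * (\<integral>\<omega>. indicator A \<omega> * X \<omega> j \<partial>M) - w j * c j * p = p * (w j)^2"
      by (simp add: power2_eq_square algebra_simps)
  qed
  also have "\<dots> = p * (\<Sum>j<n. (w j)^2)" by (simp add: sum_distrib_left)
  finally have eq2: "(\<integral>\<omega>. indicator A \<omega> * (\<Sum>j<n. (X \<omega> j - c j) * w j) \<partial>M) = p * (\<Sum>j<n. (w j)^2)" .
  have pw: "0 \<le> - (indicator A \<omega> * (\<Sum>j<n. (X \<omega> j - c j) * w j))" for \<omega>
    using claim[OF XC, of \<omega>] by (cases "\<omega> \<in> A") auto
  have "0 \<le> (\<integral>\<omega>. - (indicator A \<omega> * (\<Sum>j<n. (X \<omega> j - c j) * w j)) \<partial>M)"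
    by (rule integral_nonneg_AE) (rule AE_I2, rule pw)
  then have "p * (\<Sum>j<n. (w j)^2) \<le> 0" using eq2 by simp
  moreover have nn: "0 \<le> (\<Sum>j<n. (w j)^2)" by (intro sum_nonneg) auto
  ultimately have "(\<Sum>j<n. (w j)^2) \<le> 0" using pos unfolding p_def by (simp add: mult_le_0_iff)
  then have S0: "(\<Sum>j<n. (w j)^2) = 0" using nn by linarith
  then have "\<forall>j\<in>{..<n}. (w j)^2 = 0" using sum_nonneg_eq_0_iff[of "{..<n}" "\<lambda>j. (w j)^2"] S0 by simp
  then have wz: "\<And>j. j < n \<Longrightarrow> w j = 0" by simp
  have cR: "c \<in> Rn n" using c(1) C(1) by auto
  have "?xb = c"
  proof (rule ext)
    fix j show "?xb j = c j"
    proof (cases "j < n")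
      case True then show ?thesis using wz[OF True] unfolding w_def by simp
    next
      case False then show ?thesis using PiE_arb[OF cR[unfolded Rn_def], of j] by simp
    qed
  qed
  then show ?thesis using c(1) by simp
qed



lemma coord_meas:
  assumes "X \<in> measurable M (lebn n)" "j < n"
  shows "(\<lambda>\<omega>. X \<omega> j) \<in> borel_measurable M"
proof -
  have "(\<lambda>x. x j) \<in> measurable (lebn n) lborel"
    unfolding lebn_def using assms(2) by (intro measurable_component_singleton) auto
  then show ?thesis using measurable_comp[OF assms(1)] by (simp add: comp_def)
qed

lemma dot_meas: "(\<lambda>y. dotn n t y) \<in> borel_measurable (lebn n)"
proof -
  have "\<And>j. j \<in> {..<n} \<Longrightarrow> (\<lambda>y. t j * y j) \<in> borel_measurable (lebn n)"
  proof -
    fix j assume j: "j \<in> {..<n}"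
    have "(\<lambda>x. x j) \<in> measurable (lebn n) lborel"
      unfolding lebn_def using j by (intro measurable_component_singleton) auto
    then show "(\<lambda>y. t j * y j) \<in> borel_measurable (lebn n)" by simp
  qed
  then show ?thesis unfolding dotn_def by (intro borel_measurable_sum) auto
qed

lemma dot_exp_meas: "(\<lambda>y. ennreal (exp (dotn n t y))) \<in> borel_measurable (lebn n)"
  using dot_meas[of n t] by measurable

lemma int_bounded:
  fixes X :: "'a \<Rightarrow> real" and B :: real
  assumes P: "prob_space M" and A: "A \<in> sets M" and X: "X \<in> borel_measurable M"
    and B: "\<And>\<omega>. \<omega> \<in> A \<Longrightarrow> \<bar>X \<omega>\<bar> \<le> B"
  shows "integrable M (\<lambda>\<omega>. indicator A \<omega> * X \<omega>)"
proof -
  interpret prob_space M by (rule P)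
  show ?thesis
  proof (rule integrable_const_bound[where B = "\<bar>B\<bar>"])
    show "AE x in M. norm (indicator A x * X x) \<le> \<bar>B\<bar>"
      using B by (intro AE_I2) (auto simp: indicator_def intro: order_trans[OF _ abs_ge_self])
    show "(\<lambda>\<omega>. indicator A \<omega> * X \<omega>) \<in> borel_measurable M" using X A by measurable
  qed
qed

lemma inv_apply:
  fixes Q P :: "nat \<Rightarrow> nat \<Rightarrow> real" and y :: "nat \<Rightarrow> real"
  assumes Q: "\<forall>i<n. \<forall>j<n. (\<Sum>l<n. Q i l * P l j) = (if i = j then 1 else 0)" and j: "j < n"
  shows "(\<Sum>l<n. Q j l * (\<Sum>m<n. P l m * y m)) = (y j :: real)"
proof -
  have "(\<Sum>l<n. Q j l * (\<Sum>m<n. P l m * y m)) = (\<Sum>m<n. (\<Sum>l<n. Q j l * P l m) * y m)"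
  proof -
    have "(\<Sum>l<n. Q j l * (\<Sum>m<n. P l m * y m)) = (\<Sum>l<n. \<Sum>m<n. Q j l * P l m * y m)"
      by (simp add: sum_distrib_left mult.assoc)
    also have "\<dots> = (\<Sum>m<n. \<Sum>l<n. Q j l * P l m * y m)" by (rule sum.swap)
    also have "\<dots> = (\<Sum>m<n. (\<Sum>l<n. Q j l * P l m) * y m)" by (simp add: sum_distrib_right)
    finally show ?thesis .
  qed
  also have "\<dots> = (\<Sum>m<n. if m = j then y m else 0)"
    using Q j by (intro sum.cong) auto
  also have "\<dots> = y j" using j sum.delta[of "{..<n}" j y] by simp
  finally show ?thesis .
qed

lemma int_lin:
  fixes X :: "'b \<Rightarrow> 'a \<Rightarrow> real" and c :: "'b \<Rightarrow> real"
  assumes "finite J" "\<And>j. j \<in> J \<Longrightarrow> integrable M (\<lambda>\<omega>. indicator A \<omega> * X j \<omega>)"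
  shows "integrable M (\<lambda>\<omega>. indicator A \<omega> * (\<Sum>j\<in>J. c j * X j \<omega>))"
    and "(\<integral>\<omega>. indicator A \<omega> * (\<Sum>j\<in>J. c j * X j \<omega>) \<partial>M) = (\<Sum>j\<in>J. c j * (\<integral>\<omega>. indicator A \<omega> * X j \<omega> \<partial>M))"
proof -
  have eq: "(\<lambda>\<omega>. indicator A \<omega> * (\<Sum>j\<in>J. c j * X j \<omega>)) = (\<lambda>\<omega>. \<Sum>j\<in>J. c j * (indicator A \<omega> * X j \<omega>))"
    by (rule ext) (simp add: sum_distrib_left mult.left_commute)
  show "integrable M (\<lambda>\<omega>. indicator A \<omega> * (\<Sum>j\<in>J. c j * X j \<omega>))"
    unfolding eq using assms by auto
  show "(\<integral>\<omega>. indicator A \<omega> * (\<Sum>j\<in>J. c j * X j \<omega>) \<partial>M) = (\<Sum>j\<in>J. c j * (\<integral>\<omega>. indicator A \<omega> * X j \<omega> \<partial>M))"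
    unfolding eq using assms by (simp add: integral_sum)
qed


lemma dot_affine:
  "dotn m x (vadd (vadd (mv m d D s) (mv m m P y)) q) =
     (\<Sum>l<d. (\<Sum>j<m. x j * D j l) * s l) + (\<Sum>l<m. (\<Sum>j<m. x j * P j l) * y l) + (\<Sum>j<m. x j * q j)"
proof -
  have "dotn m x (vadd (vadd (mv m d D s) (mv m m P y)) q) =
        (\<Sum>j<m. x j * ((\<Sum>l<d. D j l * s l) + (\<Sum>l<m. P j l * y l) + q j))"
    unfolding dotn_def vadd_def mv_def by (intro sum.cong) auto
  also have "\<dots> = (\<Sum>j<m. \<Sum>l<d. x j * D j l * s l) + (\<Sum>j<m. \<Sum>l<m. x j * P j l * y l) + (\<Sum>j<m. x j * q j)"
    by (simp add: sum.distrib distrib_left sum_distrib_left mult.assoc)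
  also have "(\<Sum>j<m. \<Sum>l<d. x j * D j l * s l) = (\<Sum>l<d. \<Sum>j<m. x j * D j l * s l)" by (rule sum.swap)
  also have "(\<Sum>j<m. \<Sum>l<m. x j * P j l * y l) = (\<Sum>l<m. \<Sum>j<m. x j * P j l * y l)" by (rule sum.swap)
  finally show ?thesis by (simp add: sum_distrib_right)
qed

lemma neg_reorder: "(X::ereal) \<le> ereal (- r) \<Longrightarrow> ereal r \<le> - X"
  by (cases X) auto

theorem lemma1:
  fixes M :: "'a measure"
    and d K :: nat and p :: "nat \<Rightarrow> nat"
    and S :: "'a \<Rightarrow> nat \<Rightarrow> real"
    and \<Omega> Ov :: "nat \<Rightarrow> 'a \<Rightarrow> nat \<Rightarrow> real"
    and f :: "(nat \<Rightarrow> real) \<Rightarrow> ennreal"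
    and g :: "nat \<Rightarrow> (nat \<Rightarrow> real) \<Rightarrow> ennreal"
    and D P :: "nat \<Rightarrow> nat \<Rightarrow> nat \<Rightarrow> real"
    and q :: "nat \<Rightarrow> nat \<Rightarrow> real"
    and RS :: "(nat \<Rightarrow> real) set" and RO :: "nat \<Rightarrow> (nat \<Rightarrow> real) set"
  assumes "prob_space M"
    and "distributed M (lebn d) S f"
    and "\<And>k. k \<in> {1..K} \<Longrightarrow> distributed M (lebn (p k)) (\<Omega> k) (g k)"
    and "prob_space.indep_vars M (\<lambda>i. lebn (if i = 0 then d else p i))
           (\<lambda>i. if i = 0 then S else \<Omega> i) {0..K}"
    and "\<And>k. k \<in> {1..K} \<Longrightarrow> invertible_sq (p k) (P k)"
    and "\<And>k. k \<in> {1..K} \<Longrightarrow> q k \<in> Rn (p k)"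
    and "\<And>k \<omega>. k \<in> {1..K} \<Longrightarrow> \<omega> \<in> space M \<Longrightarrow> Ov k \<omega> \<in> Rn (p k)"
    and "\<And>k \<omega>. k \<in> {1..K} \<Longrightarrow> \<omega> \<in> space M \<Longrightarrow>
           \<Omega> k \<omega> = vadd (vadd (mv (p k) d (D k) (S \<omega>)) (mv (p k) (p k) (P k) (Ov k \<omega>))) (q k)"
    and "RS \<subseteq> Rn d" and "\<And>k. k \<in> {1..K} \<Longrightarrow> RO k \<subseteq> Rn (p k)"
    and "RS \<noteq> {} \<and> (\<forall>k\<in>{1..K}. RO k \<noteq> {}) \<longrightarrow>
           convex_set RS \<and> compact RS \<and> (\<forall>k\<in>{1..K}. convex_set (RO k) \<and> compact (RO k))"
  shows "eln (emeasure M {\<omega> \<in> space M. S \<omega> \<in> RS \<and> (\<forall>k\<in>{1..K}. Ov k \<omega> \<in> RO k)})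
           \<le> - (INF so \<in> {(s, ov). s \<in> RS \<and> (\<forall>k\<in>{1..K}. ov k \<in> RO k)}.
                  convex_conj d (log_mgf d f) (fst so)
                  + (\<Sum>k=1..K. convex_conj (p k) (log_mgf (p k) (g k))
                       (vadd (vadd (mv (p k) d (D k) (fst so)) (mv (p k) (p k) (P k) (snd so k))) (q k))))"
proof -
  interpret prob_space M by (rule assms(1))
  define A where "A = {\<omega> \<in> space M. S \<omega> \<in> RS \<and> (\<forall>k\<in>{1..K}. Ov k \<omega> \<in> RO k)}"
  show ?thesis
  proof (cases "A \<in> sets M \<and> measure M A > 0")
    case False
    have "emeasure M A = 0"
    proof (cases "A \<in> sets M")
      case True then have "measure M A = 0" using False measure_nonneg[of M A] by linarith
      then show ?thesis using True by (simp add: emeasure_eq_measure)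
    next
      case False then show ?thesis by (rule emeasure_notin_sets)
    qed
    then show ?thesis unfolding A_def[symmetric] by (simp add: eln_def)
  next
    case True
    then have Aset: "A \<in> sets M" and pos: "measure M A > 0" by auto
    define pr where "pr = measure M A"
    have prpos: "pr > 0" using pos by (simp add: pr_def)
    have "A \<noteq> {}" using pos by auto
    then obtain \<omega>0 where "\<omega>0 \<in> A" by auto
    then have "RS \<noteq> {} \<and> (\<forall>k\<in>{1..K}. RO k \<noteq> {})" by (auto simp: A_def)
    then have cvx: "convex_set RS \<and> compact RS \<and> (\<forall>k\<in>{1..K}. convex_set (RO k) \<and> compact (RO k))"
      using assms(11) by blast
    have mS: "S \<in> measurable M (lebn d)" using assms(2) by (rule distributed_measurable)
    have mO: "\<And>k. k \<in> {1..K} \<Longrightarrow> \<Omega> k \<in> measurable M (lebn (p k))"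
      using assms(3) distributed_measurable by blast
    have mSj: "\<And>j. j < d \<Longrightarrow> (\<lambda>\<omega>. S \<omega> j) \<in> borel_measurable M" using coord_meas[OF mS] .
    have mOmj: "\<And>k j. k \<in> {1..K} \<Longrightarrow> j < p k \<Longrightarrow> (\<lambda>\<omega>. \<Omega> k \<omega> j) \<in> borel_measurable M"
      using coord_meas[OF mO] by blast
    have "\<forall>k\<in>{1..K}. \<exists>Qk. \<forall>i<p k. \<forall>j<p k. (\<Sum>l<p k. Qk i l * P k l j) = (if i = j then 1 else 0)"
      using assms(5) unfolding invertible_sq_def by blast
    then obtain Q where Q: "\<And>k. k \<in> {1..K} \<Longrightarrow> \<forall>i<p k. \<forall>j<p k. (\<Sum>l<p k. Q k i l * P k l j) = (if i = j then 1 else 0)"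
      by (metis bchoice)
    have Ov_eq: "Ov k \<omega> j = (\<Sum>l<p k. Q k j l * (\<Omega> k \<omega> l - (\<Sum>m<d. D k l m * S \<omega> m) - q k l))"
      if k: "k \<in> {1..K}" and \<omega>: "\<omega> \<in> space M" and j: "j < p k" for k \<omega> j
    proof -
      have "\<And>l. l < p k \<Longrightarrow> \<Omega> k \<omega> l - (\<Sum>m<d. D k l m * S \<omega> m) - q k l = (\<Sum>m<p k. P k l m * Ov k \<omega> m)"
        using assms(8)[OF k \<omega>] by (simp add: vadd_def mv_def)
      then have "(\<Sum>l<p k. Q k j l * (\<Omega> k \<omega> l - (\<Sum>m<d. D k l m * S \<omega> m) - q k l))
          = (\<Sum>l<p k. Q k j l * (\<Sum>m<p k. P k l m * Ov k \<omega> m))" by (intro sum.cong) auto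
      also have "\<dots> = Ov k \<omega> j" by (rule inv_apply[OF Q[OF k] j])
      finally show ?thesis by simp
    qed
    have mOvj: "(\<lambda>\<omega>. Ov k \<omega> j) \<in> borel_measurable M" if k: "k \<in> {1..K}" and j: "j < p k" for k j
    proof -
      have "(\<lambda>\<omega>. \<Sum>l<p k. Q k j l * (\<Omega> k \<omega> l - (\<Sum>m<d. D k l m * S \<omega> m) - q k l)) \<in> borel_measurable M"
        using mOmj[OF k] mSj
        by (intro borel_measurable_sum borel_measurable_times borel_measurable_diff borel_measurable_const) auto
      then show ?thesis using Ov_eq[OF k _ j] by (subst measurable_cong) auto
    qed
    have iS: "integrable M (\<lambda>\<omega>. indicator A \<omega> * S \<omega> j)" if j: "j < d" for j
    proof -
      obtain B where B: "\<forall>x\<in>RS. \<bar>x j\<bar> \<le> B" using compact_coord_bound[of RS j] cvx by blast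
      show ?thesis using B by (intro int_bounded[OF assms(1) Aset mSj[OF j], of B]) (auto simp: A_def)
    qed
    have iO: "integrable M (\<lambda>\<omega>. indicator A \<omega> * Ov k \<omega> j)" if k: "k \<in> {1..K}" and j: "j < p k" for k j
    proof -
      obtain B where B: "\<forall>x\<in>RO k. \<bar>x j\<bar> \<le> B" using compact_coord_bound[of "RO k" j] cvx k by blast
      show ?thesis using B k by (intro int_bounded[OF assms(1) Aset mOvj[OF k j], of B]) (auto simp: A_def)
    qed
    define sb where "sb = (\<lambda>j. if j < d then (\<integral>\<omega>. indicator A \<omega> * S \<omega> j \<partial>M) / measure M A else undefined)"
    define ob where "ob = (\<lambda>k j. if j < p k then (\<integral>\<omega>. indicator A \<omega> * Ov k \<omega> j \<partial>M) / measure M A else undefined)"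
    have sbR: "sb \<in> RS" unfolding sb_def
      using cvx iS by (intro mean_in_convex[OF assms(1) Aset pos assms(9)]) (auto simp: A_def)
    have obR: "ob k \<in> RO k" if k: "k \<in> {1..K}" for k
      unfolding ob_def
      using cvx iO k by (intro mean_in_convex[OF assms(1) Aset pos assms(10)[OF k]]) (auto simp: A_def)
    define nn where "nn i = (if i = 0 then d else p i)" for i
    define Z where "Z i = (if i = 0 then S else \<Omega> i)" for i
    define G where "G i = (if i = 0 then f else g i)" for i
    define xb where "xb i = (if i = 0 then sb else vadd (vadd (mv (p i) d (D i) sb) (mv (p i) (p i) (P i) (ob i))) (q i))" for i
    define \<phi> where "\<phi> i x = (\<integral>\<^sup>+y. ennreal (exp (dotn (nn i) x y)) * G i y \<partial>lebn (nn i))" for i x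
    have distZ: "distributed M (lebn (nn i)) (Z i) (G i)" if "i \<in> {0..K}" for i
      using assms(2,3) that by (auto simp: nn_def Z_def G_def)
    have indep: "indep_vars (\<lambda>i. lebn (nn i)) Z {0..K}"
      using assms(4) by (simp add: nn_def[abs_def] Z_def[abs_def])
    have sbj: "(\<integral>\<omega>. indicator A \<omega> * S \<omega> j \<partial>M) = pr * sb j" if "j < d" for j
      using that prpos by (simp add: sb_def pr_def)
    have obj: "(\<integral>\<omega>. indicator A \<omega> * Ov k \<omega> j \<partial>M) = pr * ob k j" if "j < p k" for k j
      using that prpos by (simp add: ob_def pr_def)
    have intZ: "integrable M (\<lambda>\<omega>. indicator A \<omega> * dotn (nn i) x (Z i \<omega>)) \<and>
       (\<integral>\<omega>. indicator A \<omega> * dotn (nn i) x (Z i \<omega>) \<partial>M) = pr * dotn (nn i) x (xb i)"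
      if i: "i \<in> {0..K}" for i x
    proof (cases "i = 0")
      case True
      have eq: "(\<lambda>\<omega>. indicator A \<omega> * dotn (nn i) x (Z i \<omega>)) = (\<lambda>\<omega>. indicator A \<omega> * (\<Sum>j<d. x j * S \<omega> j))"
        using True by (simp add: nn_def Z_def dotn_def)
      have "(\<Sum>j<d. x j * (\<integral>\<omega>. indicator A \<omega> * S \<omega> j \<partial>M)) = (\<Sum>j<d. x j * (pr * sb j))"
        using sbj by (intro sum.cong) auto
      also have "\<dots> = pr * dotn (nn i) x (xb i)" using True
        by (simp add: nn_def xb_def dotn_def sum_distrib_left algebra_simps)
      finally show ?thesis unfolding eq using int_lin[of "{..<d}" M A "\<lambda>j \<omega>. S \<omega> j" x] iS by auto
    next
      case False
      then have k: "i \<in> {1..K}" using i by auto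
      define \<alpha> where "\<alpha> l = (\<Sum>j<p i. x j * D i j l)" for l
      define \<beta> where "\<beta> l = (\<Sum>j<p i. x j * P i j l)" for l
      define c0 where "c0 = (\<Sum>j<p i. x j * q i j)"
      have eqf: "indicator A \<omega> * dotn (nn i) x (Z i \<omega>) =
          indicator A \<omega> * (\<Sum>l<d. \<alpha> l * S \<omega> l) + indicator A \<omega> * (\<Sum>l<p i. \<beta> l * Ov i \<omega> l) + c0 * indicator A \<omega>"
        if \<omega>: "\<omega> \<in> space M" for \<omega>
        using False assms(8)[OF k \<omega>] by (simp add: nn_def Z_def dot_affine \<alpha>_def \<beta>_def c0_def algebra_simps)
      have xbeq: "dotn (nn i) x (xb i) = (\<Sum>l<d. \<alpha> l * sb l) + (\<Sum>l<p i. \<beta> l * ob i l) + c0"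
        using False by (simp add: nn_def xb_def dot_affine \<alpha>_def \<beta>_def c0_def)
      have I1: "integrable M (\<lambda>\<omega>. indicator A \<omega> * (\<Sum>l<d. \<alpha> l * S \<omega> l))"
           "(\<integral>\<omega>. indicator A \<omega> * (\<Sum>l<d. \<alpha> l * S \<omega> l) \<partial>M) = (\<Sum>l<d. \<alpha> l * (\<integral>\<omega>. indicator A \<omega> * S \<omega> l \<partial>M))"
        using int_lin[of "{..<d}" M A "\<lambda>j \<omega>. S \<omega> j" \<alpha>] iS by auto
      have I2: "integrable M (\<lambda>\<omega>. indicator A \<omega> * (\<Sum>l<p i. \<beta> l * Ov i \<omega> l))"
           "(\<integral>\<omega>. indicator A \<omega> * (\<Sum>l<p i. \<beta> l * Ov i \<omega> l) \<partial>M) = (\<Sum>l<p i. \<beta> l * (\<integral>\<omega>. indicator A \<omega> * Ov i \<omega> l \<partial>M))"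
        using int_lin[of "{..<p i}" M A "\<lambda>j \<omega>. Ov i \<omega> j" \<beta>] iO[OF k] by auto
      have iA: "integrable M (\<lambda>\<omega>. indicator A \<omega> :: real)"
        using Aset by (simp add: integrable_real_indicator emeasure_eq_measure)
      have intg: "integrable M (\<lambda>\<omega>. indicator A \<omega> * (\<Sum>l<d. \<alpha> l * S \<omega> l) + indicator A \<omega> * (\<Sum>l<p i. \<beta> l * Ov i \<omega> l) + c0 * indicator A \<omega>)"
        using I1(1) I2(1) iA by auto
      have "(\<integral>\<omega>. indicator A \<omega> * (\<Sum>l<d. \<alpha> l * S \<omega> l) + indicator A \<omega> * (\<Sum>l<p i. \<beta> l * Ov i \<omega> l) + c0 * indicator A \<omega> \<partial>M)
          = (\<Sum>l<d. \<alpha> l * (\<integral>\<omega>. indicator A \<omega> * S \<omega> l \<partial>M)) + (\<Sum>l<p i. \<beta> l * (\<integral>\<omega>. indicator A \<omega> * Ov i \<omega> l \<partial>M)) + c0 * pr"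
        using I1 I2 iA Aset by (simp add: pr_def)
      also have "\<dots> = pr * dotn (nn i) x (xb i)"
      proof -
        have "(\<Sum>l<d. \<alpha> l * (\<integral>\<omega>. indicator A \<omega> * S \<omega> l \<partial>M)) = (\<Sum>l<d. \<alpha> l * (pr * sb l))"
          using sbj by (intro sum.cong) auto
        moreover have "(\<Sum>l<p i. \<beta> l * (\<integral>\<omega>. indicator A \<omega> * Ov i \<omega> l \<partial>M)) = (\<Sum>l<p i. \<beta> l * (pr * ob i l))"
          using obj by (intro sum.cong) auto
        ultimately show ?thesis unfolding xbeq by (simp add: sum_distrib_left algebra_simps)
      qed
      finally have "(\<integral>\<omega>. indicator A \<omega> * (\<Sum>l<d. \<alpha> l * S \<omega> l) + indicator A \<omega> * (\<Sum>l<p i. \<beta> l * Ov i \<omega> l) + c0 * indicator A \<omega> \<partial>M)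
          = pr * dotn (nn i) x (xb i)" .
      moreover have "(\<integral>\<omega>. indicator A \<omega> * dotn (nn i) x (Z i \<omega>) \<partial>M) =
          (\<integral>\<omega>. indicator A \<omega> * (\<Sum>l<d. \<alpha> l * S \<omega> l) + indicator A \<omega> * (\<Sum>l<p i. \<beta> l * Ov i \<omega> l) + c0 * indicator A \<omega> \<partial>M)"
        by (rule Bochner_Integration.integral_cong[OF refl]) (rule eqf)
      moreover have "integrable M (\<lambda>\<omega>. indicator A \<omega> * dotn (nn i) x (Z i \<omega>)) =
          integrable M (\<lambda>\<omega>. indicator A \<omega> * (\<Sum>l<d. \<alpha> l * S \<omega> l) + indicator A \<omega> * (\<Sum>l<p i. \<beta> l * Ov i \<omega> l) + c0 * indicator A \<omega>)"
        by (rule Bochner_Integration.integrable_cong[OF refl]) (rule eqf)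
      then have "integrable M (\<lambda>\<omega>. indicator A \<omega> * dotn (nn i) x (Z i \<omega>))" using intg by simp
      ultimately show ?thesis by simp
    qed
    have H: "ennreal (pr * exp (\<Sum>i\<in>{0..K}. dotn (nn i) (t i) (xb i))) \<le> (\<Prod>i\<in>{0..K}. \<phi> i (t i))"
      if t: "\<forall>i\<in>{0..K}. t i \<in> Rn (nn i)" for t
    proof -
      define Y where "Y \<omega> = (\<Sum>i\<in>{0..K}. dotn (nn i) (t i) (Z i \<omega>))" for \<omega>
      have \<phi>eq: "\<phi> i (t i) = (\<integral>\<^sup>+\<omega>. ennreal (exp (dotn (nn i) (t i) (Z i \<omega>))) \<partial>M)" if i: "i \<in> {0..K}" for i
        unfolding \<phi>_def using distributed_nn_integral[OF distZ[OF i] dot_exp_meas[of "nn i" "t i"]]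
        by (simp add: mult.commute)
      have "(\<Prod>i\<in>{0..K}. \<phi> i (t i)) = (\<Prod>i\<in>{0..K}. \<integral>\<^sup>+\<omega>. ennreal (exp (dotn (nn i) (t i) (Z i \<omega>))) \<partial>M)"
        using \<phi>eq by (intro prod.cong) auto
      also have "\<dots> = (\<integral>\<^sup>+\<omega>. (\<Prod>i\<in>{0..K}. ennreal (exp (dotn (nn i) (t i) (Z i \<omega>)))) \<partial>M)"
        by (rule indep_vars_nn_integral[symmetric])
           (auto intro!: indep_vars_compose2[OF indep] dot_exp_meas)
      also have "\<dots> = (\<integral>\<^sup>+\<omega>. ennreal (exp (Y \<omega>)) \<partial>M)"
        by (intro nn_integral_cong) (simp add: Y_def prod_ennreal exp_sum)
      finally have eqP: "(\<Prod>i\<in>{0..K}. \<phi> i (t i)) = (\<integral>\<^sup>+\<omega>. ennreal (exp (Y \<omega>)) \<partial>M)" .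
      have eqY: "(\<lambda>\<omega>. indicator A \<omega> * Y \<omega>) = (\<lambda>\<omega>. \<Sum>i\<in>{0..K}. indicator A \<omega> * dotn (nn i) (t i) (Z i \<omega>))"
        by (simp add: Y_def sum_distrib_left)
      have iY: "integrable M (\<lambda>\<omega>. indicator A \<omega> * Y \<omega>)"
        unfolding eqY by (rule Bochner_Integration.integrable_sum) (use intZ in blast)
      have "(\<integral>\<omega>. indicator A \<omega> * Y \<omega> \<partial>M) = (\<Sum>i\<in>{0..K}. pr * dotn (nn i) (t i) (xb i))"
        unfolding eqY
      proof (subst Bochner_Integration.integral_sum)
        show "\<And>i. i \<in> {0..K} \<Longrightarrow> integrable M (\<lambda>\<omega>. indicator A \<omega> * dotn (nn i) (t i) (Z i \<omega>))"
          using intZ by blast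
        show "(\<Sum>i\<in>{0..K}. \<integral>\<omega>. indicator A \<omega> * dotn (nn i) (t i) (Z i \<omega>) \<partial>M) = (\<Sum>i\<in>{0..K}. pr * dotn (nn i) (t i) (xb i))"
          using intZ by (intro sum.cong) auto
      qed
      then have cY: "(\<integral>\<omega>. indicator A \<omega> * Y \<omega> \<partial>M) / measure M A = (\<Sum>i\<in>{0..K}. dotn (nn i) (t i) (xb i))"
        using prpos by (simp add: sum_distrib_left[symmetric] pr_def)
      show ?thesis
        using jensen_exp[OF assms(1) Aset pos iY] unfolding cY eqP pr_def .
    qed
    define z where "z i = (\<lambda>j. if j < nn i then 0 else undefined :: real)" for i
    have zprop: "z i \<in> Rn (nn i) \<and> dotn (nn i) (z i) (xb i) = 0 \<and> \<phi> i (z i) = 1" if i: "i \<in> {0..K}" for i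
    proof (intro conjI)
      show "z i \<in> Rn (nn i)" by (auto simp: z_def Rn_def PiE_def extensional_def)
      show "dotn (nn i) (z i) (xb i) = 0" by (simp add: z_def dotn_def)
      have "\<phi> i (z i) = (\<integral>\<^sup>+y. G i y * 1 \<partial>lebn (nn i))"
        unfolding \<phi>_def by (intro nn_integral_cong) (simp add: z_def dotn_def)
      also have "\<dots> = (\<integral>\<^sup>+\<omega>. 1 \<partial>M)"
        using distributed_nn_integral[OF distZ[OF i], of "\<lambda>_. 1"] by simp
      also have "\<dots> = 1" by (simp add: emeasure_space_1)
      finally show "\<phi> i (z i) = 1" .
    qed
    have SB: "(\<Sum>i\<in>{0..K}. SUP x\<in>Rn (nn i). ereal (dotn (nn i) x (xb i)) - eln (\<phi> i x)) \<le> ereal (- ln pr)"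
      by (rule sup_sum_bound[of "{0..K}" z "\<lambda>i. Rn (nn i)" "\<lambda>i x. dotn (nn i) x (xb i)" \<phi> pr])
         (use zprop prpos H in auto)
    have conj_eq: "convex_conj (nn i) (log_mgf (nn i) (G i)) (xb i) = (SUP x\<in>Rn (nn i). ereal (dotn (nn i) x (xb i)) - eln (\<phi> i x))" for i
      by (simp add: convex_conj_def log_mgf_def \<phi>_def)
    let ?F = "\<lambda>so. convex_conj d (log_mgf d f) (fst so)
                  + (\<Sum>k=1..K. convex_conj (p k) (log_mgf (p k) (g k))
                       (vadd (vadd (mv (p k) d (D k) (fst so)) (mv (p k) (p k) (P k) (snd so k))) (q k)))"
    have Fval: "?F (sb, ob) = (\<Sum>i\<in>{0..K}. convex_conj (nn i) (log_mgf (nn i) (G i)) (xb i))"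
    proof -
      have "(\<Sum>i\<in>{0..K}. convex_conj (nn i) (log_mgf (nn i) (G i)) (xb i)) =
            convex_conj (nn 0) (log_mgf (nn 0) (G 0)) (xb 0) + (\<Sum>i\<in>{Suc 0..K}. convex_conj (nn i) (log_mgf (nn i) (G i)) (xb i))"
        by (rule sum.atLeast_Suc_atMost) simp
      also have "(\<Sum>i\<in>{Suc 0..K}. convex_conj (nn i) (log_mgf (nn i) (G i)) (xb i)) =
          (\<Sum>k=1..K. convex_conj (p k) (log_mgf (p k) (g k))
                       (vadd (vadd (mv (p k) d (D k) sb) (mv (p k) (p k) (P k) (ob k))) (q k)))"
        by (intro sum.cong) (auto simp: nn_def G_def xb_def)
      finally show ?thesis by (simp add: nn_def G_def xb_def)
    qed
    have mem: "(sb, ob) \<in> {(s, ov). s \<in> RS \<and> (\<forall>k\<in>{1..K}. ov k \<in> RO k)}" using sbR obR by auto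
    have "(INF so \<in> {(s, ov). s \<in> RS \<and> (\<forall>k\<in>{1..K}. ov k \<in> RO k)}. ?F so) \<le> ?F (sb, ob)"
      using mem by (rule INF_lower)
    also have "\<dots> \<le> ereal (- ln pr)" unfolding Fval conj_eq using SB .
    finally have INFle: "(INF so \<in> {(s, ov). s \<in> RS \<and> (\<forall>k\<in>{1..K}. ov k \<in> RO k)}. ?F so) \<le> ereal (- ln pr)" .
    have "eln (emeasure M A) = ereal (ln pr)"
      using prpos by (simp add: emeasure_eq_measure pr_def eln_ennreal)
    also have "\<dots> \<le> - (INF so \<in> {(s, ov). s \<in> RS \<and> (\<forall>k\<in>{1..K}. ov k \<in> RO k)}. ?F so)"
      using INFle by (rule neg_reorder)
    finally show ?thesis unfolding A_def .
  qed
qed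

end
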